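(* Let $(G,\boldsymbol{\gamma})$ be a reflection-Laman graph. Then its reduced graph $(G^*,\boldsymbol{\gamma})$ is a reflection-$(2,2)$ graph.
   Context: A colored graph $(G,\boldsymbol{\gamma})$ is a finite directed multigraph $G$ (self-loops and parallel edges allowed) with a color $\gamma_{ij}\in\mathbb{Z}/2\mathbb{Z}$ on each edge. $\rho:H_1(G,\mathbb{Z})\to\mathbb{Z}/2\mathbb{Z}$ sends a cycle to the sum of its edge colors; the $\rho$-image of a subgraph is the image of its cycles, trivial if $\{0\}$. For a subgraph $G'$: $n',m'$ are its numbers of vertices and edges, $c'$ (resp. $c'_0$) the number of its connected components with non-trivial (resp. trivial) $\rho$-image. With $n$ vertices and $m$ edges in $G$: $(G,\boldsymbol{\gamma})$ is reflection-Laman if $m=2n-1$ and every subgraph satisfies $m'\le 2n'-c'-3c'_0$; a Ross graph if $m=2n-2$ and every subgraph satisfies $m'\le 2n'-2c'-3c'_0$; a reflection-$(2,2)$ graph if $m=2n-1$ and every subgraph satisfies $m'\le 2n'-c'-2c'_0$. A Ross-circuit is a colored graph that becomes a Ross graph after removing any one of its edges. In a reflection-Laman graph, the subgraphs that are Ross-circuits, $G_1,\dots,G_t$, are pairwise vertex-disjoint. The reduced graph $(G^*,\boldsymbol{\gamma})$ is obtained by contracting each $G_k$ that is not already a single vertex with a self-loop (such a loop is necessarily colored $1$) into a new vertex $v_k$ (edges with one endpoint in $G_k$ are reattached to $v_k$ keeping their colors), removing all self-loops created in this process, and then adding a new self-loop colored $1$ at each new vertex $v_k$. *)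

theory Defs
  imports Main
begin

text \<open>A colored graph is given by a vertex set V, an edge set E (edges are abstract
  objects, so parallel edges and self-loops are allowed), head and tail maps
  hv, tv, and a color map col, where col e = True means color 1 in Z/2Z.\<close>

definition colored_graph :: "'v set \<Rightarrow> 'e set \<Rightarrow> ('e \<Rightarrow> 'v) \<Rightarrow> ('e \<Rightarrow> 'v) \<Rightarrow> bool" where
  "colored_graph V E hv tv \<longleftrightarrow> finite V \<and> finite E \<and> (\<forall>e\<in>E. hv e \<in> V \<and> tv e \<in> V)"

inductive walk :: "'e set \<Rightarrow> ('e \<Rightarrow> 'v) \<Rightarrow> ('e \<Rightarrow> 'v) \<Rightarrow> 'v \<Rightarrow> 'e list \<Rightarrow> 'v \<Rightarrow> bool"
  for F hv tv where
  walk_nil: "walk F hv tv u [] u"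
| walk_cons: "e \<in> F \<Longrightarrow> (hv e = u \<and> tv e = x) \<or> (tv e = u \<and> hv e = x) \<Longrightarrow>
     walk F hv tv x es w \<Longrightarrow> walk F hv tv u (e # es) w"

definition components :: "'v set \<Rightarrow> 'e set \<Rightarrow> ('e \<Rightarrow> 'v) \<Rightarrow> ('e \<Rightarrow> 'v) \<Rightarrow> 'v set set" where
  "components V' F hv tv = {{w \<in> V'. \<exists>es. walk F hv tv u es w} | u. u \<in> V'}"

text \<open>A component C of (V', F) has non-trivial rho-image iff some closed walk in it has
  odd color sum (closed walks represent all classes of H_1).\<close>
definition nontrivial_rho :: "'e set \<Rightarrow> ('e \<Rightarrow> 'v) \<Rightarrow> ('e \<Rightarrow> 'v) \<Rightarrow> ('e \<Rightarrow> bool) \<Rightarrow> 'v set \<Rightarrow> bool" where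
  "nontrivial_rho F hv tv col C \<longleftrightarrow>
     (\<exists>u\<in>C. \<exists>es. walk F hv tv u es u \<and> odd (length (filter col es)))"

definition c_nontriv :: "'v set \<Rightarrow> 'e set \<Rightarrow> ('e \<Rightarrow> 'v) \<Rightarrow> ('e \<Rightarrow> 'v) \<Rightarrow> ('e \<Rightarrow> bool) \<Rightarrow> nat" where
  "c_nontriv V' F hv tv col = card {C \<in> components V' F hv tv. nontrivial_rho F hv tv col C}"

definition c_triv :: "'v set \<Rightarrow> 'e set \<Rightarrow> ('e \<Rightarrow> 'v) \<Rightarrow> ('e \<Rightarrow> 'v) \<Rightarrow> ('e \<Rightarrow> bool) \<Rightarrow> nat" where
  "c_triv V' F hv tv col = card {C \<in> components V' F hv tv. \<not> nontrivial_rho F hv tv col C}"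

definition verts :: "'e set \<Rightarrow> ('e \<Rightarrow> 'v) \<Rightarrow> ('e \<Rightarrow> 'v) \<Rightarrow> 'v set" where
  "verts F hv tv = hv ` F \<union> tv ` F"

definition sparse_cond :: "int \<Rightarrow> int \<Rightarrow> 'e set \<Rightarrow> ('e \<Rightarrow> 'v) \<Rightarrow> ('e \<Rightarrow> 'v) \<Rightarrow> ('e \<Rightarrow> bool) \<Rightarrow> bool" where
  "sparse_cond a b E hv tv col \<longleftrightarrow>
     (\<forall>F. F \<subseteq> E \<and> F \<noteq> {} \<longrightarrow>
        int (card F) \<le> 2 * int (card (verts F hv tv))
           - a * int (c_nontriv (verts F hv tv) F hv tv col)
           - b * int (c_triv (verts F hv tv) F hv tv col))"

definition reflection_laman :: "'v set \<Rightarrow> 'e set \<Rightarrow> ('e \<Rightarrow> 'v) \<Rightarrow> ('e \<Rightarrow> 'v) \<Rightarrow> ('e \<Rightarrow> bool) \<Rightarrow> bool" where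
  "reflection_laman V E hv tv col \<longleftrightarrow> colored_graph V E hv tv \<and>
     int (card E) = 2 * int (card V) - 1 \<and> sparse_cond 1 3 E hv tv col"

definition ross_graph :: "'v set \<Rightarrow> 'e set \<Rightarrow> ('e \<Rightarrow> 'v) \<Rightarrow> ('e \<Rightarrow> 'v) \<Rightarrow> ('e \<Rightarrow> bool) \<Rightarrow> bool" where
  "ross_graph V E hv tv col \<longleftrightarrow> colored_graph V E hv tv \<and>
     int (card E) = 2 * int (card V) - 2 \<and> sparse_cond 2 3 E hv tv col"

definition reflection_22 :: "'v set \<Rightarrow> 'e set \<Rightarrow> ('e \<Rightarrow> 'v) \<Rightarrow> ('e \<Rightarrow> 'v) \<Rightarrow> ('e \<Rightarrow> bool) \<Rightarrow> bool" where
  "reflection_22 V E hv tv col \<longleftrightarrow> colored_graph V E hv tv \<and>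
     int (card E) = 2 * int (card V) - 1 \<and> sparse_cond 1 2 E hv tv col"

definition ross_circuit :: "'v set \<Rightarrow> 'e set \<Rightarrow> ('e \<Rightarrow> 'v) \<Rightarrow> ('e \<Rightarrow> 'v) \<Rightarrow> ('e \<Rightarrow> bool) \<Rightarrow> bool" where
  "ross_circuit V E hv tv col \<longleftrightarrow> E \<noteq> {} \<and> (\<forall>e\<in>E. ross_graph V (E - {e}) hv tv col)"

definition ross_circuit_subgraphs ::
  "'v set \<Rightarrow> 'e set \<Rightarrow> ('e \<Rightarrow> 'v) \<Rightarrow> ('e \<Rightarrow> 'v) \<Rightarrow> ('e \<Rightarrow> bool) \<Rightarrow> ('v set \<times> 'e set) set" where
  "ross_circuit_subgraphs V E hv tv col =
     {(V', E'). V' \<subseteq> V \<and> E' \<subseteq> E \<and> ross_circuit V' E' hv tv col}"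

definition contracted_sets :: "'v set \<Rightarrow> 'e set \<Rightarrow> ('e \<Rightarrow> 'v) \<Rightarrow> ('e \<Rightarrow> 'v) \<Rightarrow> ('e \<Rightarrow> bool) \<Rightarrow> 'v set set" where
  "contracted_sets V E hv tv col =
     {V'. \<exists>E'. (V', E') \<in> ross_circuit_subgraphs V E hv tv col \<and> \<not> (card V' = 1 \<and> card E' = 1)}"

text \<open>Vertices of the reduced graph are represented as sets of original vertices:
  a contracted circuit becomes its vertex set, every other vertex v becomes {v}.\<close>
definition red_cls :: "'v set \<Rightarrow> 'e set \<Rightarrow> ('e \<Rightarrow> 'v) \<Rightarrow> ('e \<Rightarrow> 'v) \<Rightarrow> ('e \<Rightarrow> bool) \<Rightarrow> 'v \<Rightarrow> 'v set" where
  "red_cls V E hv tv col v =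
     (if \<exists>C \<in> contracted_sets V E hv tv col. v \<in> C
      then (THE C. C \<in> contracted_sets V E hv tv col \<and> v \<in> C) else {v})"

definition red_V :: "'v set \<Rightarrow> 'e set \<Rightarrow> ('e \<Rightarrow> 'v) \<Rightarrow> ('e \<Rightarrow> 'v) \<Rightarrow> ('e \<Rightarrow> bool) \<Rightarrow> 'v set set" where
  "red_V V E hv tv col = red_cls V E hv tv col ` V"

text \<open>Edges of the reduced graph: original edges (Inl e), except those which are not
  self-loops but become self-loops by the contraction; plus a new self-loop Inr C,
  colored 1, at each new vertex C.\<close>
definition red_E :: "'v set \<Rightarrow> 'e set \<Rightarrow> ('e \<Rightarrow> 'v) \<Rightarrow> ('e \<Rightarrow> 'v) \<Rightarrow> ('e \<Rightarrow> bool) \<Rightarrow> ('e + 'v set) set" where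
  "red_E V E hv tv col =
     Inl ` {e \<in> E. hv e = tv e \<or> red_cls V E hv tv col (hv e) \<noteq> red_cls V E hv tv col (tv e)}
     \<union> Inr ` contracted_sets V E hv tv col"

definition red_hd :: "'v set \<Rightarrow> 'e set \<Rightarrow> ('e \<Rightarrow> 'v) \<Rightarrow> ('e \<Rightarrow> 'v) \<Rightarrow> ('e \<Rightarrow> bool) \<Rightarrow> ('e + 'v set) \<Rightarrow> 'v set" where
  "red_hd V E hv tv col = case_sum (\<lambda>e. red_cls V E hv tv col (hv e)) (\<lambda>C. C)"

definition red_tl :: "'v set \<Rightarrow> 'e set \<Rightarrow> ('e \<Rightarrow> 'v) \<Rightarrow> ('e \<Rightarrow> 'v) \<Rightarrow> ('e \<Rightarrow> bool) \<Rightarrow> ('e + 'v set) \<Rightarrow> 'v set" where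
  "red_tl V E hv tv col = case_sum (\<lambda>e. red_cls V E hv tv col (tv e)) (\<lambda>C. C)"

definition red_col :: "('e \<Rightarrow> bool) \<Rightarrow> ('e + 'v set) \<Rightarrow> bool" where
  "red_col col = case_sum col (\<lambda>_. True)"

end

theory Submission
  imports Defs
begin


lemma walk_append: "walk F h t u es v \<Longrightarrow> walk F h t v fs w \<Longrightarrow> walk F h t u (es@fs) w"
  by (induction rule: walk.induct) (auto intro: walk.intros)

lemma walk_single: "e \<in> F \<Longrightarrow> (h e = v \<and> t e = w) \<or> (t e = v \<and> h e = w) \<Longrightarrow> walk F h t v [e] w"
  by (auto intro: walk.intros)

lemma walk_rev: "walk F h t u es w \<Longrightarrow> walk F h t w (rev es) u"
proof (induction rule: walk.induct)
  case (walk_nil u) then show ?case by (auto intro: walk.intros)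
next
  case (walk_cons e u x es w)
  have "walk F h t x [e] u" using walk_cons.hyps(1,2) by (auto intro: walk.intros)
  then show ?case using walk_append[OF walk_cons.IH] by auto
qed

definition conn where "conn F h t u w = (\<exists>es. walk F h t u es w)"

lemma conn_refl: "conn F h t u u" unfolding conn_def by (auto intro: walk.intros)
lemma conn_sym: "conn F h t u w \<Longrightarrow> conn F h t w u"
proof -
  assume "conn F h t u w" then obtain es where "walk F h t u es w" unfolding conn_def by blast
  then have "walk F h t w (rev es) u" by (rule walk_rev)
  then show ?thesis unfolding conn_def by blast
qed
lemma conn_trans: "conn F h t u v \<Longrightarrow> conn F h t v w \<Longrightarrow> conn F h t u w"
proof -
  assume "conn F h t u v" "conn F h t v w"
  then obtain es fs where "walk F h t u es v" "walk F h t v fs w" unfolding conn_def by blast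
  then have "walk F h t u (es@fs) w" by (rule walk_append)
  then show ?thesis unfolding conn_def by blast
qed
lemma conn_edge: "e \<in> F \<Longrightarrow> conn F h t (h e) (t e)"
proof -
  assume "e \<in> F" then have "walk F h t (h e) [e] (t e)" by (rule walk_single) simp
  then show ?thesis unfolding conn_def by blast
qed

lemma components_conn: "components V' F h t = {{w\<in>V'. conn F h t u w} | u. u \<in> V'}"
  unfolding components_def conn_def by simp

lemma verts_finite: "finite F \<Longrightarrow> finite (verts F h t)" unfolding verts_def by auto

lemma comps_finite: "finite V' \<Longrightarrow> finite (components V' F h t)"
proof -
  assume "finite V'"
  have "components V' F h t \<subseteq> Pow V'" unfolding components_conn by auto
  then show ?thesis using \<open>finite V'\<close> finite_subset by blast
qed

lemma comps_sub: "C \<in> components V' F h t \<Longrightarrow> C \<noteq> {} \<and> C \<subseteq> V'"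
proof -
  assume "C \<in> components V' F h t"
  then obtain u where u: "u \<in> V'" "C = {w\<in>V'. conn F h t u w}" unfolding components_conn by blast
  then have "u \<in> C" using conn_refl by simp
  then show ?thesis using u by blast
qed

lemma comps_closed: "C \<in> components V' F h t \<Longrightarrow> x \<in> C \<Longrightarrow> y \<in> V' \<Longrightarrow> conn F h t x y \<Longrightarrow> y \<in> C"
proof -
  assume a: "C \<in> components V' F h t" "x \<in> C" "y \<in> V'" "conn F h t x y"
  then obtain u where u: "u \<in> V'" "C = {w\<in>V'. conn F h t u w}" unfolding components_conn by blast
  then have "conn F h t u x" using a(2) by simp
  then have "conn F h t u y" using a(4) by (rule conn_trans)
  then show ?thesis using u a(3) by simp
qed

lemma comps_eq: "C \<in> components V' F h t \<Longrightarrow> x \<in> C \<Longrightarrow> C = {w\<in>V'. conn F h t x w}"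
proof -
  assume a: "C \<in> components V' F h t" "x \<in> C"
  then obtain u where u: "u \<in> V'" "C = {w\<in>V'. conn F h t u w}" unfolding components_conn by blast
  then have ux: "conn F h t u x" using a(2) by simp
  then have xu: "conn F h t x u" by (rule conn_sym)
  show ?thesis
  proof (rule set_eqI, rule iffI)
    fix w assume "w \<in> C" then have "w \<in> V'" "conn F h t u w" using u by auto
    then show "w \<in> {w\<in>V'. conn F h t x w}" using conn_trans[OF xu] by simp
  next
    fix w assume "w \<in> {w\<in>V'. conn F h t x w}"
    then have "w \<in> V'" "conn F h t x w" by auto
    then show "w \<in> C" using conn_trans[OF ux] u by simp
  qed
qed

lemma comps_disj: "C \<in> components V' F h t \<Longrightarrow> D \<in> components V' F h t \<Longrightarrow> x \<in> C \<Longrightarrow> x \<in> D \<Longrightarrow> C = D"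
proof -
  assume "C \<in> components V' F h t" "D \<in> components V' F h t" "x \<in> C" "x \<in> D"
  then show ?thesis using comps_eq[of C V' F h t x] comps_eq[of D V' F h t x] by simp
qed

lemma comps_cover: "v \<in> V' \<Longrightarrow> v \<in> {w\<in>V'. conn F h t v w} \<and> {w\<in>V'. conn F h t v w} \<in> components V' F h t"
proof
  show "v \<in> V' \<Longrightarrow> v \<in> {w\<in>V'. conn F h t v w}" using conn_refl[of F h t v] by simp
  show "v \<in> V' \<Longrightarrow> {w\<in>V'. conn F h t v w} \<in> components V' F h t" unfolding components_conn by blast
qed

lemma cnt_ge1:
  assumes "finite F" "F \<noteq> {}"
  shows "c_nontriv (verts F h t) F h t col + c_triv (verts F h t) F h t col \<ge> 1"
proof -
  let ?VF = "verts F h t" let ?CS = "components ?VF F h t"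
  have fin: "finite ?CS" using comps_finite verts_finite assms(1) by blast
  obtain e where "e \<in> F" using assms(2) by auto
  then have "h e \<in> ?VF" unfolding verts_def by auto
  then have "{w\<in>?VF. conn F h t (h e) w} \<in> ?CS" by (rule comps_cover[THEN conjunct2])
  then have ne: "?CS \<noteq> {}" by auto
  let ?P = "nontrivial_rho F h t col"
  have eq: "?CS = {C\<in>?CS. ?P C} \<union> {C\<in>?CS. \<not> ?P C}" by auto
  have "card ?CS = card {C\<in>?CS. ?P C} + card {C\<in>?CS. \<not> ?P C}"
    by (subst eq, rule card_Un_disjoint) (use fin in auto)
  then have "c_nontriv ?VF F h t col + c_triv ?VF F h t col = card ?CS"
    unfolding c_nontriv_def c_triv_def by simp
  moreover have "card ?CS > 0" using fin ne by (simp add: card_gt_0_iff)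
  ultimately show ?thesis by simp
qed

lemma sparse_use:
  assumes "sparse_cond a b E h t col" "F \<subseteq> E" "F \<noteq> {}" "finite F" "0 \<le> a" "a \<le> b"
  shows "int (card F) \<le> 2 * int (card (verts F h t)) - a"
proof -
  let ?c = "int (c_nontriv (verts F h t) F h t col)" let ?d = "int (c_triv (verts F h t) F h t col)"
  have "?c + ?d \<ge> 1" using cnt_ge1[OF assms(4,3), of h t col] by linarith
  then have "a * ?c + b * ?d \<ge> a" using assms(5,6)
  proof -
    have "a * ?d \<le> b * ?d" using assms(6) by (simp add: mult_right_mono)
    moreover have "a * 1 \<le> a * (?c + ?d)" using assms(5) \<open>?c + ?d \<ge> 1\<close> by (rule mult_left_mono[rotated])
    ultimately show ?thesis by (simp add: distrib_left)
  qed
  moreover have "int (card F) \<le> 2 * int (card (verts F h t)) - a * ?c - b * ?d"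
    using assms(1-3) unfolding sparse_cond_def by blast
  ultimately show ?thesis by linarith
qed



lemma verts_K:
  assumes "C \<in> components (verts F h t) F h t"
  shows "verts {e\<in>F. h e \<in> C} h t = C"
proof
  let ?VF = "verts F h t"
  show "verts {e\<in>F. h e \<in> C} h t \<subseteq> C"
  proof
    fix w assume "w \<in> verts {e\<in>F. h e \<in> C} h t"
    then obtain e where e: "e \<in> F" "h e \<in> C" "w = h e \<or> w = t e" unfolding verts_def by blast
    have "t e \<in> ?VF" using e(1) unfolding verts_def by blast
    then have "t e \<in> C" using comps_closed[OF assms e(2) _ conn_edge[OF e(1)]] by blast
    then show "w \<in> C" using e by blast
  qed
  show "C \<subseteq> verts {e\<in>F. h e \<in> C} h t"
  proof
    fix w assume w: "w \<in> C"
    then have "w \<in> ?VF" using comps_sub[OF assms] by blast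
    then obtain e where e: "e \<in> F" "w = h e \<or> w = t e" unfolding verts_def by blast
    show "w \<in> verts {e\<in>F. h e \<in> C} h t"
    proof (cases "w = h e")
      case True then show ?thesis using e w unfolding verts_def by blast
    next
      case False
      then have wt: "w = t e" using e by blast
      have "h e \<in> ?VF" using e(1) unfolding verts_def by blast
      moreover have "conn F h t w (h e)" using conn_sym[OF conn_edge[OF e(1)]] wt by simp
      ultimately have "h e \<in> C" using comps_closed[OF assms w] by blast
      then show ?thesis using e wt unfolding verts_def by blast
    qed
  qed
qed

lemma decomp:
  assumes fin: "finite F"
  and bound: "\<And>C. C \<in> components (verts F h t) F h t \<Longrightarrow>
     int (card {e\<in>F. h e \<in> C}) \<le> 2 * int (card C) - (if nontrivial_rho F h t col C then 1 else 2)"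
  shows "int (card F) \<le> 2 * int (card (verts F h t)) - int (c_nontriv (verts F h t) F h t col)
            - 2 * int (c_triv (verts F h t) F h t col)"
proof -
  let ?VF = "verts F h t" let ?CS = "components ?VF F h t"
  let ?K = "\<lambda>C. {e\<in>F. h e \<in> C}"
  let ?P = "nontrivial_rho F h t col"
  have finV: "finite ?VF" using verts_finite[OF fin] .
  have finCS: "finite ?CS" using comps_finite[OF finV] .
  have finC: "\<forall>C\<in>?CS. finite C"
  proof
    fix C assume "C \<in> ?CS" then have "C \<subseteq> ?VF" using comps_sub by blast
    then show "finite C" using finV by (rule finite_subset)
  qed
  have disjK: "\<forall>C\<in>?CS. \<forall>D\<in>?CS. C \<noteq> D \<longrightarrow> ?K C \<inter> ?K D = {}"
  proof (intro ballI impI)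
    fix C D assume a: "C \<in> ?CS" "D \<in> ?CS" "C \<noteq> D"
    show "?K C \<inter> ?K D = {}"
    proof (rule ccontr)
      assume "?K C \<inter> ?K D \<noteq> {}"
      then obtain e where "h e \<in> C" "h e \<in> D" by blast
      then have "C = D" using comps_disj[OF a(1,2)] by blast
      then show False using a(3) by simp
    qed
  qed
  have disjC: "\<forall>C\<in>?CS. \<forall>D\<in>?CS. C \<noteq> D \<longrightarrow> C \<inter> D = {}"
  proof (intro ballI impI)
    fix C D assume a: "C \<in> ?CS" "D \<in> ?CS" "C \<noteq> D"
    show "C \<inter> D = {}"
    proof (rule ccontr)
      assume "C \<inter> D \<noteq> {}"
      then obtain x where "x \<in> C" "x \<in> D" by blast
      then have "C = D" using comps_disj[OF a(1,2)] by blast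
      then show False using a(3) by simp
    qed
  qed
  have F_eq: "F = \<Union>(?K ` ?CS)"
  proof
    show "F \<subseteq> \<Union>(?K ` ?CS)"
    proof
      fix e assume "e \<in> F"
      then have "h e \<in> ?VF" unfolding verts_def by blast
      from comps_cover[OF this, of F h t] show "e \<in> \<Union>(?K ` ?CS)" using \<open>e \<in> F\<close> by blast
    qed
    show "\<Union>(?K ` ?CS) \<subseteq> F" by blast
  qed
  have V_eq: "?VF = \<Union>((\<lambda>C. C) ` ?CS)"
  proof
    show "?VF \<subseteq> \<Union>((\<lambda>C. C) ` ?CS)"
    proof
      fix v assume "v \<in> ?VF"
      from comps_cover[OF this, of F h t] show "v \<in> \<Union>((\<lambda>C. C) ` ?CS)" by blast
    qed
    show "\<Union>((\<lambda>C. C) ` ?CS) \<subseteq> ?VF"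
    proof
      fix v assume "v \<in> \<Union>((\<lambda>C. C) ` ?CS)"
      then obtain C where "C \<in> ?CS" "v \<in> C" by blast
      then show "v \<in> ?VF" using comps_sub by blast
    qed
  qed
  have cF: "card F = (\<Sum>C\<in>?CS. card (?K C))"
    apply (subst F_eq)
    apply (rule card_UN_disjoint[OF finCS])
    using fin apply simp
    using disjK by blast
  have cV: "card ?VF = (\<Sum>C\<in>?CS. card C)"
    apply (subst V_eq)
    apply (rule card_UN_disjoint[OF finCS finC disjC])
    done
  have "int (card F) = (\<Sum>C\<in>?CS. int (card (?K C)))" using cF by simp
  also have "\<dots> \<le> (\<Sum>C\<in>?CS. 2 * int (card C) - (if ?P C then 1 else 2))"
    by (rule sum_mono) (rule bound)
  also have "\<dots> = 2 * (\<Sum>C\<in>?CS. int (card C)) - (\<Sum>C\<in>?CS. (if ?P C then 1 else 2))"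
    by (simp add: sum_subtractf sum_distrib_left)
  also have "(\<Sum>C\<in>?CS. (if ?P C then 1 else 2)) = (\<Sum>C\<in>?CS \<inter> {x. ?P x}. (1::int)) + (\<Sum>C\<in>?CS \<inter> - {x. ?P x}. 2)"
    by (rule sum.If_cases[OF finCS])
  also have "\<dots> = int (c_nontriv ?VF F h t col) + 2 * int (c_triv ?VF F h t col)"
  proof -
    have "?CS \<inter> {x. ?P x} = {C\<in>?CS. ?P C}" "?CS \<inter> - {x. ?P x} = {C\<in>?CS. \<not> ?P C}" by auto
    then show ?thesis unfolding c_nontriv_def c_triv_def by simp
  qed
  also have "(\<Sum>C\<in>?CS. int (card C)) = int (card ?VF)" using cV by simp
  finally show ?thesis by linarith
qed



lemma verts_insert[simp]: "verts (insert e F) h t = insert (h e) (insert (t e) (verts F h t))"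
  unfolding verts_def by auto
lemma verts_empty[simp]: "verts {} h t = {}" unfolding verts_def by auto
lemma verts_mono: "F \<subseteq> G \<Longrightarrow> verts F h t \<subseteq> verts G h t" unfolding verts_def by auto
lemma verts_Un: "verts (F \<union> G) h t = verts F h t \<union> verts G h t" unfolding verts_def by auto

locale RL =
  fixes V :: "'v set" and E :: "'e set" and hv tv :: "'e \<Rightarrow> 'v" and col :: "'e \<Rightarrow> bool"
  assumes RL: "reflection_laman V E hv tv col"
begin

abbreviation "CT \<equiv> contracted_sets V E hv tv col"
abbreviation "cls \<equiv> red_cls V E hv tv col"
definition I :: "'v set \<Rightarrow> 'e set" where "I X = {e\<in>E. hv e \<in> X \<and> tv e \<in> X}"

lemma finV: "finite V" and finE: "finite E" and endpts: "e \<in> E \<Longrightarrow> hv e \<in> V \<and> tv e \<in> V"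
  and cardE: "int (card E) = 2 * int (card V) - 1" and sp13: "sparse_cond 1 3 E hv tv col"
  using RL unfolding reflection_laman_def colored_graph_def by auto

lemma lam1: "F \<subseteq> E \<Longrightarrow> F \<noteq> {} \<Longrightarrow> int (card F) \<le> 2 * int (card (verts F hv tv)) - 1"
  using sparse_use[OF sp13, of F] finE finite_subset by fastforce

lemma circ_main:
  assumes "X \<in> CT"
  shows "X \<subseteq> V \<and> finite X \<and> card X \<ge> 2 \<and> I X \<subseteq> E \<and> verts (I X) hv tv = X
    \<and> int (card (I X)) = 2 * int (card X) - 1 \<and> (\<forall>e\<in>I X. hv e \<noteq> tv e)
    \<and> (\<forall>F. F \<subseteq> I X \<longrightarrow> F \<noteq> I X \<longrightarrow> F \<noteq> {} \<longrightarrow> int (card F) \<le> 2 * int (card (verts F hv tv)) - 2)"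
proof -
  obtain E' where XV: "X \<subseteq> V" and E'E: "E' \<subseteq> E" and rc: "ross_circuit X E' hv tv col"
    and nd: "\<not> (card X = 1 \<and> card E' = 1)"
    using assms unfolding contracted_sets_def ross_circuit_subgraphs_def by blast
  have ne: "E' \<noteq> {}" and rg: "\<And>e. e \<in> E' \<Longrightarrow> ross_graph X (E' - {e}) hv tv col"
    using rc unfolding ross_circuit_def by auto
  have finE': "finite E'" using E'E finE finite_subset by blast
  obtain e0 where e0: "e0 \<in> E'" using ne by blast
  have finX: "finite X" using rg[OF e0] unfolding ross_graph_def colored_graph_def by blast
  have "int (card (E' - {e0})) = 2 * int (card X) - 2" using rg[OF e0] unfolding ross_graph_def by blast
  moreover have "card (E' - {e0}) = card E' - 1" using e0 finE' by simp
  moreover have "card E' > 0" using e0 finE' card_gt_0_iff by blast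
  ultimately have cE': "int (card E') = 2 * int (card X) - 1" by linarith
  have cX: "card X \<ge> 2"
  proof (rule ccontr)
    assume "\<not> card X \<ge> 2"
    then have "card X = 0 \<or> card X = 1" by linarith
    then show False
    proof
      assume "card X = 0" then show False using cE' by simp
    next
      assume c1: "card X = 1" then have "card E' = 1" using cE' by simp
      then show False using c1 nd by simp
    qed
  qed
  have two: "\<And>e. e \<in> E' \<Longrightarrow> \<exists>e'\<in>E'. e' \<noteq> e"
  proof (rule ccontr)
    fix e assume "e \<in> E'" "\<not> (\<exists>e'\<in>E'. e' \<noteq> e)"
    then have "E' = {e}" by blast
    then show False using cE' cX by simp
  qed
  have ends: "\<And>e. e \<in> E' \<Longrightarrow> hv e \<in> X \<and> tv e \<in> X"
  proof -
    fix e assume "e \<in> E'"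
    then obtain e' where "e' \<in> E'" "e' \<noteq> e" using two by blast
    then have "colored_graph X (E' - {e'}) hv tv" using rg unfolding ross_graph_def by blast
    then show "hv e \<in> X \<and> tv e \<in> X" using \<open>e \<in> E'\<close> \<open>e' \<noteq> e\<close> unfolding colored_graph_def by blast
  qed
  have vsub: "verts E' hv tv \<subseteq> X" using ends unfolding verts_def by blast
  have "int (card E') \<le> 2 * int (card (verts E' hv tv)) - 1" using lam1[OF E'E ne] .
  then have "card X \<le> card (verts E' hv tv)" using cE' by linarith
  then have vE': "verts E' hv tv = X" using card_subset_eq[OF finX vsub] card_mono[OF finX vsub] by linarith
  have ross: "\<And>F. F \<subseteq> E' \<Longrightarrow> F \<noteq> E' \<Longrightarrow> F \<noteq> {} \<Longrightarrow> int (card F) \<le> 2 * int (card (verts F hv tv)) - 2"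
  proof -
    fix F assume a: "F \<subseteq> E'" "F \<noteq> E'" "F \<noteq> {}"
    then obtain e where e: "e \<in> E'" "e \<notin> F" by blast
    then have "sparse_cond 2 3 (E' - {e}) hv tv col" using rg unfolding ross_graph_def by blast
    moreover have "F \<subseteq> E' - {e}" using a e by blast
    moreover have "finite F" using a(1) finE' finite_subset by blast
    ultimately show "int (card F) \<le> 2 * int (card (verts F hv tv)) - 2"
      using sparse_use[of 2 3 "E' - {e}" hv tv col F] a(3) by simp
  qed
  have noloop: "\<And>e. e \<in> E' \<Longrightarrow> hv e \<noteq> tv e"
  proof
    fix e assume e: "e \<in> E'" "hv e = tv e"
    have "{e} \<noteq> E'" using two[OF e(1)] by blast
    then have "int (card {e}) \<le> 2 * int (card (verts {e} hv tv)) - 2" using ross[of "{e}"] e by blast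
    then show False using e by simp
  qed
  have IX: "I X = E'"
  proof
    show "E' \<subseteq> I X" using ends E'E unfolding I_def by blast
    show "I X \<subseteq> E'"
    proof
      fix e assume "e \<in> I X"
      then have e: "e \<in> E" "hv e \<in> X" "tv e \<in> X" unfolding I_def by auto
      show "e \<in> E'"
      proof (rule ccontr)
        assume ni: "e \<notin> E'"
        have sub: "insert e E' \<subseteq> E" using e E'E by blast
        have "verts (insert e E') hv tv \<subseteq> X" using e vsub by simp
        then have "card (verts (insert e E') hv tv) \<le> card X" using card_mono[OF finX] by blast
        moreover have "card (insert e E') = card E' + 1" using ni finE' by simp
        moreover have "int (card (insert e E')) \<le> 2 * int (card (verts (insert e E') hv tv)) - 1"
          using lam1[OF sub] by blast
        ultimately show False using cE' by linarith
      qed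
    qed
  qed
  have nl: "\<forall>e\<in>E'. hv e \<noteq> tv e" using noloop by blast
  have rs: "\<forall>F. F \<subseteq> E' \<longrightarrow> F \<noteq> E' \<longrightarrow> F \<noteq> {} \<longrightarrow> int (card F) \<le> 2 * int (card (verts F hv tv)) - 2"
    using ross by blast
  show ?thesis unfolding IX
    apply (insert XV finX cX E'E vE' cE' nl rs)
    apply (intro conjI)
    apply assumption+
    done
qed

lemma circ_XV: "X \<in> CT \<Longrightarrow> X \<subseteq> V" using circ_main by blast
lemma circ_fin: "X \<in> CT \<Longrightarrow> finite X" using circ_main by blast
lemma circ_card: "X \<in> CT \<Longrightarrow> card X \<ge> 2" using circ_main by blast
lemma circ_IE: "X \<in> CT \<Longrightarrow> I X \<subseteq> E" using circ_main by blast
lemma circ_verts: "X \<in> CT \<Longrightarrow> verts (I X) hv tv = X" using circ_main by blast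
lemma circ_cardI: "X \<in> CT \<Longrightarrow> int (card (I X)) = 2 * int (card X) - 1" using circ_main by blast
lemma circ_noloop: "X \<in> CT \<Longrightarrow> e \<in> I X \<Longrightarrow> hv e \<noteq> tv e" using circ_main by blast
lemma circ_ross: "X \<in> CT \<Longrightarrow> F \<subseteq> I X \<Longrightarrow> F \<noteq> I X \<Longrightarrow> F \<noteq> {} \<Longrightarrow>
   int (card F) \<le> 2 * int (card (verts F hv tv)) - 2" using circ_main by blast

lemma finI: "finite (I X)" unfolding I_def using finE by simp

lemma CT_disj:
  assumes X: "X \<in> CT" and Y: "Y \<in> CT" and XY: "X \<inter> Y \<noteq> {}"
  shows "X = Y"
proof (rule ccontr)
  assume neq: "X \<noteq> Y"
  let ?G = "I X \<inter> I Y"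
  have fX: "finite X" "finite Y" using circ_fin X Y by auto
  have cXY: "card (X \<inter> Y) \<ge> 1" using XY fX by (simp add: Suc_le_eq card_gt_0_iff)
  have vG: "verts ?G hv tv \<subseteq> X \<inter> Y"
    using verts_mono[of ?G "I X" hv tv] verts_mono[of ?G "I Y" hv tv] circ_verts[OF X] circ_verts[OF Y] by blast
  have cvG: "card (verts ?G hv tv) \<le> card (X \<inter> Y)" using card_mono[OF _ vG] fX by simp
  have Gb: "int (card ?G) \<le> 2 * int (card (X \<inter> Y)) - 2"
  proof (cases "?G = {}")
    case True then show ?thesis using cXY by simp
  next
    case False
    have "?G \<noteq> I X"
    proof
      assume "?G = I X"
      then have sub: "I X \<subseteq> I Y" by blast
      have "I X \<noteq> I Y" using neq circ_verts[OF X] circ_verts[OF Y] by metis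
      moreover have "I X \<noteq> {}" using circ_cardI[OF X] circ_card[OF X] by auto
      ultimately have "int (card (I X)) \<le> 2 * int (card (verts (I X) hv tv)) - 2"
        using circ_ross[OF Y sub] by blast
      then show False using circ_cardI[OF X] circ_verts[OF X] by simp
    qed
    then have "int (card ?G) \<le> 2 * int (card (verts ?G hv tv)) - 2"
      using circ_ross[OF X, of ?G] False by blast
    then show ?thesis using cvG by linarith
  qed
  have sub: "I X \<union> I Y \<subseteq> E" using circ_IE X Y by blast
  have nU: "I X \<union> I Y \<noteq> {}" using circ_cardI[OF X] circ_card[OF X] by auto
  have "int (card (I X \<union> I Y)) \<le> 2 * int (card (verts (I X \<union> I Y) hv tv)) - 1" using lam1[OF sub nU] .
  moreover have "verts (I X \<union> I Y) hv tv = X \<union> Y" using circ_verts X Y verts_Un by metis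
  ultimately have U1: "int (card (I X \<union> I Y)) \<le> 2 * int (card (X \<union> Y)) - 1" by simp
  have "card (I X \<union> I Y) + card ?G = card (I X) + card (I Y)" using card_Un_Int finI by metis
  moreover have "card (X \<union> Y) + card (X \<inter> Y) = card X + card Y" using card_Un_Int fX by metis
  ultimately show False using U1 using Gb circ_cardI[OF X] circ_cardI[OF Y] by linarith
qed

end


context RL begin

lemma finCT: "finite CT"
proof -
  have "CT \<subseteq> Pow V" using circ_XV by blast
  then show ?thesis using finV finite_subset by blast
qed

lemma cls_CT: "X \<in> CT \<Longrightarrow> v \<in> X \<Longrightarrow> cls v = X"
proof -
  assume a: "X \<in> CT" "v \<in> X"
  have "(THE C. C \<in> CT \<and> v \<in> C) = X"
    by (rule the_equality) (use a CT_disj in blast)+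
  then show ?thesis using a unfolding red_cls_def by auto
qed

lemma cls_nCT: "(\<forall>X\<in>CT. v \<notin> X) \<Longrightarrow> cls v = {v}"
  unfolding red_cls_def by auto

lemma sing_nCT: "{v} \<notin> CT"
proof
  assume "{v} \<in> CT" then have "card {v} \<ge> 2" by (rule circ_card)
  then show False by simp
qed

lemma cls_cases: "(cls v \<in> CT \<and> v \<in> cls v) \<or> (cls v = {v} \<and> (\<forall>X\<in>CT. v \<notin> X))"
proof (cases "\<exists>X\<in>CT. v \<in> X")
  case True
  then obtain X where "X \<in> CT" "v \<in> X" by blast
  then show ?thesis using cls_CT by simp
next
  case False then show ?thesis using cls_nCT by blast
qed

lemma cls_mem: "v \<in> cls v" using cls_cases by blast

lemma cls_nCT_sing: "cls v \<notin> CT \<Longrightarrow> cls v = {v}" using cls_cases by blast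

lemma cls_trans: "w \<in> cls u \<Longrightarrow> cls w = cls u"
proof -
  assume w: "w \<in> cls u"
  show ?thesis
  proof (cases "cls u \<in> CT")
    case True then show ?thesis using cls_CT w by simp
  next
    case False then have "cls u = {u}" using cls_nCT_sing by blast
    then show ?thesis using w by simp
  qed
qed

lemma cls_eq_CT: "cls u = cls v \<Longrightarrow> u \<noteq> v \<Longrightarrow> cls u \<in> CT"
proof (rule ccontr)
  assume a: "cls u = cls v" "u \<noteq> v" "cls u \<notin> CT"
  then have "cls u = {u}" using cls_nCT_sing by blast
  moreover have "v \<in> cls u" using a(1) cls_mem by simp
  ultimately show False using a(2) by simp
qed

lemma cls_disj: "Q1 \<in> cls ` U \<Longrightarrow> Q2 \<in> cls ` U \<Longrightarrow> Q1 \<noteq> Q2 \<Longrightarrow> Q1 \<inter> Q2 = {}"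
proof (rule ccontr)
  assume a: "Q1 \<in> cls ` U" "Q2 \<in> cls ` U" "Q1 \<noteq> Q2" "Q1 \<inter> Q2 \<noteq> {}"
  then obtain w where "w \<in> Q1" "w \<in> Q2" by blast
  moreover obtain u1 u2 where "Q1 = cls u1" "Q2 = cls u2" using a by blast
  ultimately have "cls w = Q1" "cls w = Q2" using cls_trans[of w u1] cls_trans[of w u2] by simp_all
  then show False using a(3) by simp
qed

lemma cls_finite: "finite (cls v)"
proof (cases "cls v \<in> CT")
  case True then show ?thesis by (rule circ_fin)
next
  case False then show ?thesis using cls_nCT_sing[OF False] by simp
qed

lemma cls_card_nCT: "cls v \<notin> CT \<Longrightarrow> card (cls v) = 1"
proof -
  assume "cls v \<notin> CT" then have "cls v = {v}" by (rule cls_nCT_sing)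
  then show ?thesis by simp
qed

lemma cls_sub: "v \<in> V \<Longrightarrow> cls v \<subseteq> V"
proof (cases "cls v \<in> CT")
  case True then show ?thesis by (rule circ_XV)
next
  case False then show "v \<in> V \<Longrightarrow> cls v \<subseteq> V" using cls_nCT_sing[OF False] by simp
qed

lemma CT_cls: "X \<in> CT \<Longrightarrow> \<exists>v\<in>X. cls v = X"
proof -
  assume X: "X \<in> CT"
  then have "card X \<ge> 2" by (rule circ_card)
  then have "X \<noteq> {}" by auto
  then obtain v where "v \<in> X" by blast
  then show ?thesis using cls_CT X by blast
qed

lemma CT_redV: "CT \<subseteq> red_V V E hv tv col"
proof
  fix X assume X: "X \<in> CT"
  then obtain v where v: "v \<in> X" "cls v = X" using CT_cls by blast
  have "v \<in> V" using v(1) circ_XV[OF X] by blast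
  then show "X \<in> red_V V E hv tv col" unfolding red_V_def using v(2) by blast
qed

lemma card_classes:
  assumes "finite \<C>" "\<C> \<subseteq> cls ` U"
  shows "card (\<Union>\<C>) = card (\<C> - CT) + (\<Sum>X\<in>\<C> \<inter> CT. card X)"
proof -
  have "card (\<Union>\<C>) = card (\<Union>((\<lambda>Q. Q) ` \<C>))" by simp
  also have "\<dots> = (\<Sum>Q\<in>\<C>. card Q)"
  proof (rule card_UN_disjoint[OF assms(1)])
    show "\<forall>Q\<in>\<C>. finite Q"
    proof
      fix Q assume "Q \<in> \<C>" then obtain u where "Q = cls u" using assms(2) by blast
      then show "finite Q" using cls_finite by simp
    qed
    show "\<forall>i\<in>\<C>. \<forall>j\<in>\<C>. i \<noteq> j \<longrightarrow> i \<inter> j = {}"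
    proof (intro ballI impI)
      fix i j assume "i \<in> \<C>" "j \<in> \<C>" "i \<noteq> j"
      then show "i \<inter> j = {}" using cls_disj[of i U j] assms(2) by blast
    qed
  qed
  also have "\<dots> = (\<Sum>Q\<in>\<C> - CT. card Q) + (\<Sum>Q\<in>\<C> \<inter> CT. card Q)"
  proof -
    have e: "\<C> = (\<C> - CT) \<union> (\<C> \<inter> CT)" by blast
    have "(\<Sum>Q\<in>(\<C> - CT) \<union> (\<C> \<inter> CT). card Q) = (\<Sum>Q\<in>\<C> - CT. card Q) + (\<Sum>Q\<in>\<C> \<inter> CT. card Q)"
      by (rule sum.union_disjoint) (use assms(1) in auto)
    then show ?thesis using e by simp
  qed
  also have "(\<Sum>Q\<in>\<C> - CT. card Q) = (\<Sum>Q\<in>\<C> - CT. 1)"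
  proof (rule sum.cong[OF refl])
    fix Q assume "Q \<in> \<C> - CT"
    then obtain u where "Q = cls u" "Q \<notin> CT" using assms(2) by blast
    then show "card Q = 1" using cls_card_nCT by blast
  qed
  finally show ?thesis by simp
qed

definition A :: "'e set" where "A = {e\<in>E. hv e = tv e \<or> cls (hv e) \<noteq> cls (tv e)}"

lemma A_sub: "A \<subseteq> E" unfolding A_def by blast
lemma finA: "finite A" using A_sub finE finite_subset by blast

lemma A_I_disj: "e \<in> A \<Longrightarrow> X \<in> CT \<Longrightarrow> e \<notin> I X"
proof
  assume a: "e \<in> A" "X \<in> CT" "e \<in> I X"
  then have "hv e \<noteq> tv e" using circ_noloop by blast
  moreover have "cls (hv e) = X" "cls (tv e) = X" using a(2,3) cls_CT unfolding I_def by auto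
  ultimately show False using a(1) unfolding A_def by auto
qed

lemma I_disj: "X \<in> CT \<Longrightarrow> Y \<in> CT \<Longrightarrow> X \<noteq> Y \<Longrightarrow> I X \<inter> I Y = {}"
proof (rule ccontr)
  assume a: "X \<in> CT" "Y \<in> CT" "X \<noteq> Y" "I X \<inter> I Y \<noteq> {}"
  then obtain e where "e \<in> I X" "e \<in> I Y" by blast
  then have "hv e \<in> X \<inter> Y" unfolding I_def by blast
  then have "X = Y" using CT_disj a(1,2) by blast
  then show False using a(3) by simp
qed

lemma card_exp:
  assumes "A' \<subseteq> A" "\<S> \<subseteq> CT"
  shows "card (A' \<union> \<Union>(I ` \<S>)) = card A' + (\<Sum>X\<in>\<S>. card (I X))"
proof -
  have fS: "finite \<S>" using assms(2) finCT finite_subset by blast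
  have fA': "finite A'" using assms(1) finA finite_subset by blast
  have cU: "card (\<Union>(I ` \<S>)) = (\<Sum>X\<in>\<S>. card (I X))"
  proof (rule card_UN_disjoint[OF fS])
    show "\<forall>X\<in>\<S>. finite (I X)" using finI by blast
    show "\<forall>i\<in>\<S>. \<forall>j\<in>\<S>. i \<noteq> j \<longrightarrow> I i \<inter> I j = {}" using I_disj assms(2) by blast
  qed
  have "A' \<inter> \<Union>(I ` \<S>) = {}" using A_I_disj assms by blast
  moreover have "finite (\<Union>(I ` \<S>))" using fS finI by blast
  ultimately have "card (A' \<union> \<Union>(I ` \<S>)) = card A' + card (\<Union>(I ` \<S>))"
    using card_Un_disjoint fA' by blast
  then show ?thesis using cU by simp
qed

lemma E_eq: "E = A \<union> \<Union>(I ` CT)"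
proof
  show "A \<union> \<Union>(I ` CT) \<subseteq> E" using A_sub circ_IE by blast
  show "E \<subseteq> A \<union> \<Union>(I ` CT)"
  proof
    fix e assume e: "e \<in> E"
    show "e \<in> A \<union> \<Union>(I ` CT)"
    proof (cases "e \<in> A")
      case False
      then have "hv e \<noteq> tv e" "cls (hv e) = cls (tv e)" using e unfolding A_def by auto
      then have X: "cls (hv e) \<in> CT" using cls_eq_CT by blast
      have "hv e \<in> cls (hv e)" using cls_mem by simp
      moreover have "tv e \<in> cls (hv e)" using cls_mem[of "tv e"] \<open>cls (hv e) = cls (tv e)\<close> by simp
      ultimately have "hv e \<in> cls (hv e) \<and> tv e \<in> cls (hv e)" by blast
      then have "e \<in> I (cls (hv e))" using e unfolding I_def by blast
      then show ?thesis using X by blast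
    qed simp
  qed
qed

lemma redE_eq: "red_E V E hv tv col = Inl ` A \<union> Inr ` CT"
  unfolding red_E_def A_def by simp

lemma redV_Un: "\<Union>(red_V V E hv tv col) = V"
proof
  show "\<Union>(red_V V E hv tv col) \<subseteq> V" unfolding red_V_def using cls_sub by blast
  show "V \<subseteq> \<Union>(red_V V E hv tv col)" unfolding red_V_def using cls_mem by blast
qed

lemma finRV: "finite (red_V V E hv tv col)" unfolding red_V_def using finV by simp

lemma count_22: "int (card (red_E V E hv tv col)) = 2 * int (card (red_V V E hv tv col)) - 1"
proof -
  let ?RV = "red_V V E hv tv col"
  have cRE: "card (red_E V E hv tv col) = card A + card CT"
  proof -
    have "card (Inl ` A \<union> Inr ` CT) = card (Inl ` A :: ('e + 'v set) set) + card (Inr ` CT :: ('e + 'v set) set)"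
      by (rule card_Un_disjoint) (use finA finCT in auto)
    moreover have "card (Inl ` A :: ('e + 'v set) set) = card A" by (rule card_image) simp
    moreover have "card (Inr ` CT :: ('e + 'v set) set) = card CT" by (rule card_image) simp
    ultimately show ?thesis unfolding redE_eq by simp
  qed
  have cE: "card E = card A + (\<Sum>X\<in>CT. card (I X))"
    using card_exp[of A CT] E_eq by simp
  have cV: "card V = card (?RV - CT) + (\<Sum>X\<in>?RV \<inter> CT. card X)"
    using card_classes[OF finRV, of V] redV_Un unfolding red_V_def by simp
  have RVCT: "?RV \<inter> CT = CT" using CT_redV by blast
  have cRV: "card ?RV = card (?RV - CT) + card CT"
    using card_Diff_subset[OF finCT CT_redV] card_mono[OF finRV CT_redV] by simp
  have sI: "(\<Sum>X\<in>CT. int (card (I X))) = (\<Sum>X\<in>CT. 2 * int (card X) - 1)"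
    by (rule sum.cong) (auto simp: circ_cardI)
  have "int (card E) = int (card A) + (\<Sum>X\<in>CT. int (card (I X)))" using cE by simp
  also have "\<dots> = int (card A) + 2 * (\<Sum>X\<in>CT. int (card X)) - int (card CT)"
    using sI by (simp add: sum_subtractf sum_distrib_left)
  finally have e1: "int (card E) = int (card A) + 2 * (\<Sum>X\<in>CT. int (card X)) - int (card CT)" .
  have v1: "int (card V) = int (card (?RV - CT)) + (\<Sum>X\<in>CT. int (card X))" using cV RVCT by simp
  show ?thesis using e1 v1 cRE cRV cardE by linarith
qed

lemma cg_red: "colored_graph (red_V V E hv tv col) (red_E V E hv tv col) (red_hd V E hv tv col) (red_tl V E hv tv col)"
  unfolding colored_graph_def
proof (intro conjI)
  show "finite (red_V V E hv tv col)" by (rule finRV)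
  show "finite (red_E V E hv tv col)" unfolding redE_eq using finA finCT by simp
  show "\<forall>k\<in>red_E V E hv tv col. red_hd V E hv tv col k \<in> red_V V E hv tv col \<and> red_tl V E hv tv col k \<in> red_V V E hv tv col"
  proof
  fix k assume k: "k \<in> red_E V E hv tv col"
  show "red_hd V E hv tv col k \<in> red_V V E hv tv col \<and> red_tl V E hv tv col k \<in> red_V V E hv tv col"
  proof (cases k)
    case (Inl e)
    then have "e \<in> E" using k A_sub unfolding redE_eq by auto
    then show ?thesis using Inl endpts unfolding red_hd_def red_tl_def red_V_def by auto
  next
    case (Inr X)
    then have "X \<in> CT" using k unfolding redE_eq by auto
    then show ?thesis using Inr CT_redV unfolding red_hd_def red_tl_def by auto
  qed
  qed
qed

end


context RL begin

abbreviation "RE \<equiv> red_E V E hv tv col"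
abbreviation "RV \<equiv> red_V V E hv tv col"
abbreviation "rh \<equiv> red_hd V E hv tv col"
abbreviation "rt \<equiv> red_tl V E hv tv col"
abbreviation "rc \<equiv> red_col col"

lemma rh_Inl[simp]: "rh (Inl e) = cls (hv e)" and rt_Inl[simp]: "rt (Inl e) = cls (tv e)"
  and rh_Inr[simp]: "rh (Inr X) = X" and rt_Inr[simp]: "rt (Inr X) = X"
  unfolding red_hd_def red_tl_def by simp_all

lemma walk_map: "walk A' hv tv u es w \<Longrightarrow> Inl ` A' \<subseteq> F \<Longrightarrow> walk F rh rt (cls u) (map Inl es) (cls w)"
proof (induction rule: walk.induct)
  case (walk_nil u) then show ?case by (simp add: walk.walk_nil)
next
  case (walk_cons e u x es w)
  have "Inl e \<in> F" using walk_cons by blast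
  moreover have "(rh (Inl e) = cls u \<and> rt (Inl e) = cls x) \<or> (rt (Inl e) = cls u \<and> rh (Inl e) = cls x)"
    using walk_cons.hyps(2) by auto
  ultimately show ?case using walk_cons.IH walk_cons.prems by (simp add: walk.walk_cons)
qed

lemma filter_map_Inl: "length (filter rc (map Inl es)) = length (filter col es)"
  by (induction es) (simp_all add: red_col_def)

lemma RE_endpts: "k \<in> RE \<Longrightarrow> rh k \<in> RV" using cg_red unfolding colored_graph_def by blast

lemma comp_bound:
  assumes FS: "F \<subseteq> RE" and C: "C \<in> components (verts F rh rt) F rh rt"
  shows "int (card {k\<in>F. rh k \<in> C}) \<le> 2 * int (card C) - (if nontrivial_rho F rh rt rc C then 1 else 2)"
proof -
  let ?K = "{k\<in>F. rh k \<in> C}"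
  define AC where "AC = {e. Inl e \<in> ?K}"
  define LC where "LC = {X. Inr X \<in> ?K}"
  define SC where "SC = C \<inter> CT"
  have vK: "verts ?K rh rt = C" using verts_K[OF C] .
  have K_eq: "?K = Inl ` AC \<union> Inr ` LC"
  proof
    show "?K \<subseteq> Inl ` AC \<union> Inr ` LC"
    proof
      fix k assume k: "k \<in> ?K"
      show "k \<in> Inl ` AC \<union> Inr ` LC"
      proof (cases k)
        case (Inl e) then show ?thesis using k unfolding AC_def by blast
      next
        case (Inr X) then show ?thesis using k unfolding LC_def by blast
      qed
    qed
    show "Inl ` AC \<union> Inr ` LC \<subseteq> ?K" unfolding AC_def LC_def by blast
  qed
  have AC_A: "AC \<subseteq> A"
  proof
    fix e assume "e \<in> AC" then have "Inl e \<in> RE" using FS unfolding AC_def by blast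
    then show "e \<in> A" unfolding redE_eq by blast
  qed
  have finAC: "finite AC" using AC_A finA finite_subset by blast
  have LC_SC: "LC \<subseteq> SC"
  proof
    fix X assume "X \<in> LC" then have X: "Inr X \<in> RE" "X \<in> C" using FS unfolding LC_def by auto
    then have "X \<in> CT" unfolding redE_eq by blast
    then show "X \<in> SC" using X unfolding SC_def by blast
  qed
  have SC_CT: "SC \<subseteq> CT" unfolding SC_def by blast
  have finSC: "finite SC" using SC_CT finCT finite_subset by blast
  have finLC: "finite LC" using LC_SC finSC finite_subset by blast
  have cK: "card ?K = card AC + card LC"
  proof -
    have "card (Inl ` AC \<union> Inr ` LC :: ('e + 'v set) set) = card (Inl ` AC :: ('e + 'v set) set) + card (Inr ` LC :: ('e + 'v set) set)"
      by (rule card_Un_disjoint) (use finAC finLC in auto)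
    moreover have "card (Inl ` AC :: ('e + 'v set) set) = card AC" by (rule card_image) simp
    moreover have "card (Inr ` LC :: ('e + 'v set) set) = card LC" by (rule card_image) simp
    ultimately show ?thesis using K_eq by simp
  qed
  have cLC: "card LC \<le> card SC" using card_mono[OF finSC LC_SC] .
  have CV: "C \<subseteq> verts F rh rt" using comps_sub[OF C] by blast
  have CRV: "C \<subseteq> cls ` V"
  proof
    fix Q assume "Q \<in> C" then have "Q \<in> verts F rh rt" using CV by blast
    then obtain k where k: "k \<in> F" "Q = rh k \<or> Q = rt k" unfolding verts_def by blast
    have "rh k \<in> RV" "rt k \<in> RV" using cg_red k(1) FS unfolding colored_graph_def by blast+
    then show "Q \<in> cls ` V" using k unfolding red_V_def by blast
  qed
  have finF: "finite F" using FS cg_red finite_subset unfolding colored_graph_def by blast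
  have finC: "finite C" using CV verts_finite[OF finF] finite_subset by blast
  define FK where "FK = AC \<union> \<Union>(I ` SC)"
  have cFK: "card FK = card AC + (\<Sum>X\<in>SC. card (I X))" unfolding FK_def by (rule card_exp[OF AC_A SC_CT])
  have FKE: "FK \<subseteq> E" unfolding FK_def using AC_A A_sub circ_IE SC_CT by blast
  have vFK: "verts FK hv tv = \<Union>C"
  proof
    show "verts FK hv tv \<subseteq> \<Union>C"
    proof
      fix w assume "w \<in> verts FK hv tv"
      then obtain e where e: "e \<in> FK" "w = hv e \<or> w = tv e" unfolding verts_def by blast
      show "w \<in> \<Union>C"
      proof (cases "e \<in> AC")
        case True
        then have ek: "Inl e \<in> ?K" unfolding AC_def by blast
        then have "cls (hv e) \<in> C" by simp
        moreover have "cls (tv e) \<in> C" using ek vK unfolding verts_def by force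
        ultimately show ?thesis using e(2) cls_mem by blast
      next
        case False
        then obtain X where X: "X \<in> SC" "e \<in> I X" using e(1) unfolding FK_def by blast
        then have "w \<in> X" using e(2) unfolding I_def by blast
        moreover have "X \<in> C" using X(1) unfolding SC_def by blast
        ultimately show ?thesis by blast
      qed
    qed
    show "\<Union>C \<subseteq> verts FK hv tv"
    proof
      fix w assume "w \<in> \<Union>C"
      then obtain Q where Q: "Q \<in> C" "w \<in> Q" by blast
      show "w \<in> verts FK hv tv"
      proof (cases "Q \<in> CT")
        case True
        then have "Q \<in> SC" using Q unfolding SC_def by blast
        then have "I Q \<subseteq> FK" unfolding FK_def by blast
        then have "verts (I Q) hv tv \<subseteq> verts FK hv tv" by (rule verts_mono)
        then show ?thesis using circ_verts[OF True] Q(2) by blast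
      next
        case False
        have "Q \<in> verts ?K rh rt" using vK Q(1) by simp
        then obtain k where k: "k \<in> ?K" "Q = rh k \<or> Q = rt k" unfolding verts_def by blast
        show ?thesis
        proof (cases k)
          case (Inr X)
          then have "Inr X \<in> RE" using k FS by blast
          then have "X \<in> CT" unfolding redE_eq by blast
          then show ?thesis using k Inr False by auto
        next
          case (Inl e)
          then have eAC: "e \<in> AC" using k unfolding AC_def by blast
          then have eFK: "e \<in> FK" unfolding FK_def by blast
          have "Q = cls (hv e) \<or> Q = cls (tv e)" using k Inl by auto
          then show ?thesis
          proof
            assume "Q = cls (hv e)"
            then have "Q = {hv e}" using cls_nCT_sing False by simp
            then show ?thesis using Q(2) eFK unfolding verts_def by blast
          next
            assume "Q = cls (tv e)"
            then have "Q = {tv e}" using cls_nCT_sing False by simp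
            then show ?thesis using Q(2) eFK unfolding verts_def by blast
          qed
        qed
      qed
    qed
  qed
  have cUC: "card (\<Union>C) = card (C - CT) + (\<Sum>X\<in>SC. card X)"
    using card_classes[OF finC CRV] unfolding SC_def by simp
  have cC: "card C = card (C - CT) + card SC"
  proof -
    have "C = (C - CT) \<union> SC" unfolding SC_def by blast
    moreover have "card ((C - CT) \<union> SC) = card (C - CT) + card SC"
      by (rule card_Un_disjoint) (use finC finSC in \<open>auto simp: SC_def\<close>)
    ultimately show ?thesis by simp
  qed
  have Cne: "C \<noteq> {}" using comps_sub[OF C] by blast
  have FKne: "FK \<noteq> {}"
  proof -
    have "?K \<noteq> {}"
    proof
      assume e: "?K = {}" have "C = verts ?K rh rt" using vK by simp
      also have "\<dots> = {}" unfolding e by simp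
      finally have "C = {}" .
      then show False using Cne by simp
    qed
    then obtain k where k: "k \<in> ?K" by blast
    show ?thesis
    proof (cases k)
      case (Inl e) then have "e \<in> AC" using k unfolding AC_def by blast
      then show ?thesis unfolding FK_def by blast
    next
      case (Inr X) then have "X \<in> LC" using k unfolding LC_def by blast
      then have X: "X \<in> SC" using LC_SC by blast
      then have "X \<in> CT" using SC_CT by blast
      then have "I X \<noteq> {}" using circ_cardI circ_card by fastforce
      then show ?thesis using X unfolding FK_def by blast
    qed
  qed
  have lamFK: "int (card FK) \<le> 2 * int (card (\<Union>C)) - 1" using lam1[OF FKE FKne] vFK by simp
  have sI: "(\<Sum>X\<in>SC. int (card (I X))) = 2 * (\<Sum>X\<in>SC. int (card X)) - int (card SC)"
  proof -
    have "(\<Sum>X\<in>SC. int (card (I X))) = (\<Sum>X\<in>SC. 2 * int (card X) - 1)"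
      by (rule sum.cong) (use SC_CT circ_cardI in auto)
    then show ?thesis by (simp add: sum_subtractf sum_distrib_left)
  qed
  have iFK: "int (card FK) = int (card AC) + (\<Sum>X\<in>SC. int (card (I X)))" using cFK by simp
  have iUC: "int (card (\<Union>C)) = int (card (C - CT)) + (\<Sum>X\<in>SC. int (card X))" using cUC by simp
  have ACb: "int (card AC) \<le> 2 * int (card C) - int (card SC) - 1"
    using lamFK sI iFK iUC cC by linarith
  show ?thesis
  proof (cases "nontrivial_rho F rh rt rc C")
    case True then show ?thesis using ACb cK cLC by simp
  next
    case False
    have LCe: "LC = {}"
    proof (rule ccontr)
      assume "LC \<noteq> {}"
      then obtain X where X: "X \<in> LC" by blast
      then have XF: "Inr X \<in> F" "X \<in> C" unfolding LC_def by auto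
      have "walk F rh rt X [Inr X] X" using XF(1) by (simp add: walk.walk_cons walk.walk_nil)
      moreover have "odd (length (filter rc [Inr X]))" by (simp add: red_col_def)
      ultimately have "nontrivial_rho F rh rt rc C" unfolding nontrivial_rho_def using XF(2) by blast
      then show False using False by simp
    qed
    show ?thesis
    proof (cases "SC = {}")
      case False2: False
      then have "card SC \<ge> 1" using finSC by (simp add: Suc_le_eq card_gt_0_iff)
      then show ?thesis using ACb cK LCe False by simp
    next
      case True
      have FKA: "FK = AC" unfolding FK_def True by simp
      have cCe: "card (\<Union>C) = card C" using cUC cC True by simp
      have ACE: "AC \<subseteq> E" using AC_A A_sub by blast
      have ACne: "AC \<noteq> {}" using FKne FKA by simp
      let ?VA = "verts AC hv tv"
      have c0: "c_nontriv ?VA AC hv tv col = 0"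
      proof -
        have emp: "{D \<in> components ?VA AC hv tv. nontrivial_rho AC hv tv col D} = {}"
        proof (rule ccontr)
          assume "{D \<in> components ?VA AC hv tv. nontrivial_rho AC hv tv col D} \<noteq> {}"
          then obtain D where D: "D \<in> components ?VA AC hv tv" "nontrivial_rho AC hv tv col D" by blast
          then obtain u es where u: "u \<in> D" "walk AC hv tv u es u" "odd (length (filter col es))"
            unfolding nontrivial_rho_def by blast
          have "u \<in> ?VA" using comps_sub[OF D(1)] u(1) by blast
          then have "u \<in> \<Union>C" using vFK FKA by simp
          then obtain Q where Q: "Q \<in> C" "u \<in> Q" by blast
          then obtain v where "Q = cls v" using CRV by blast
          then have cu: "cls u = Q" using cls_trans Q(2) by simp
          have "Inl ` AC \<subseteq> F" unfolding AC_def by blast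
          then have "walk F rh rt (cls u) (map Inl es) (cls u)" using walk_map[OF u(2)] by blast
          moreover have "odd (length (filter rc (map Inl es)))" unfolding filter_map_Inl using u(3) .
          ultimately have "nontrivial_rho F rh rt rc C" unfolding nontrivial_rho_def using cu Q(1) by blast
          then show False using False by simp
        qed
        show ?thesis unfolding c_nontriv_def emp by simp
      qed
      have "c_nontriv ?VA AC hv tv col + c_triv ?VA AC hv tv col \<ge> 1" using cnt_ge1[OF finAC ACne] .
      then have ct: "int (c_triv ?VA AC hv tv col) \<ge> 1" using c0 by simp
      have "int (card AC) \<le> 2 * int (card ?VA) - 1 * int (c_nontriv ?VA AC hv tv col) - 3 * int (c_triv ?VA AC hv tv col)"
        using sp13 ACE ACne unfolding sparse_cond_def by blast
      then have "int (card AC) \<le> 2 * int (card ?VA) - 3" using c0 ct by simp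
      moreover have "card ?VA = card C" using vFK FKA cCe by simp
      ultimately show ?thesis using cK LCe False by simp
    qed
  qed
qed

lemma sparse_red: "sparse_cond 1 2 RE rh rt rc"
  unfolding sparse_cond_def
proof (intro allI impI)
  fix F assume a: "F \<subseteq> RE \<and> F \<noteq> {}"
  have finF: "finite F" using a cg_red finite_subset unfolding colored_graph_def by blast
  have "int (card F) \<le> 2 * int (card (verts F rh rt)) - int (c_nontriv (verts F rh rt) F rh rt rc)
            - 2 * int (c_triv (verts F rh rt) F rh rt rc)"
    by (rule decomp[OF finF]) (rule comp_bound, use a in blast)
  then show "int (card F) \<le> 2 * int (card (verts F rh rt)) - 1 * int (c_nontriv (verts F rh rt) F rh rt rc)
            - 2 * int (c_triv (verts F rh rt) F rh rt rc)" by simp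
qed

end

theorem proposition4:
  fixes V :: "'v set" and E :: "'e set" and hv tv :: "'e \<Rightarrow> 'v" and col :: "'e \<Rightarrow> bool"
  assumes "reflection_laman V E hv tv col"
  shows "reflection_22 (red_V V E hv tv col) (red_E V E hv tv col)
           (red_hd V E hv tv col) (red_tl V E hv tv col) (red_col col)"
proof -
  interpret RL V E hv tv col using assms by (rule RL.intro)
  show ?thesis unfolding reflection_22_def using cg_red count_22 sparse_red by blast
qed


end
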